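(* Let $c\ge1$ and let $\Gamma=(V,E)$ be a $c$-uniform unoriented hypergraph with $N=|V|$ vertices, $M=|E|\ge1$ edges and no isolated vertices; let $\overline{\deg}$ be its average degree (so $c/\overline{\deg}=N/M$) and $\mu_1$ the smallest eigenvalue of its edge Laplacian $L^1$. Then $\mu_1\le c/\overline{\deg}$, and \[ \chi'(\Gamma)\;\ge\;\frac{c-\mu_1}{c/\overline{\deg}-\mu_1}, \] where, if $\mu_1=c/\overline{\deg}$, the right-hand side is interpreted as $1$. Moreover, the inequality is sharp: for integers $p\ge2$ and $1\le k\le c-1$, the $c$-uniform hyperflower with $p$ petals and $k$ central vertices attains equality.
   Context: A hypergraph has finite vertex set $V$ and edge set $E\subseteq\mathcal P(V)$; it is $c$-uniform if $|e|=c$ for all $e$, and unoriented means all incidences have orientation $+1$, so the incidence matrix $\mathcal I$ is the $N\times M$ matrix with $\mathcal I_{v,e}=1$ if $v\in e$ and $0$ otherwise. $\deg v=|\{e: v\in e\}|\ge1$, $D=\mathrm{diag}(\deg v)$, $\overline{\deg}=\frac1N\sum_v\deg v$. The edge Laplacian is the $M\times M$ matrix $L^1=\mathcal I^\top D^{-1}\mathcal I$, with eigenvalues $0\le\mu_1\le\dots\le\mu_M$. A proper strong $k$-edge-coloring is a map $c'\colon E\to\{1,\dots,k\}$ such that $c'(e_1)=c'(e_2)$ with $e_1\ne e_2$ implies $e_1\cap e_2=\varnothing$; $\chi'(\Gamma)$ is the least such $k$. The $c$-uniform hyperflower with $p$ petals and $k$ central vertices is the hypergraph with a set $h$ of $k$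 central vertices and $p$ edges of size $c$, each consisting of $h$ together with $c-k$ further vertices, where distinct edges intersect exactly in $h$. *)

theory Defs
  imports Main "HOL-Library.Disjoint_Sets" Complex_Main
begin

definition hypergraph :: "'a set \<Rightarrow> 'a set set \<Rightarrow> bool" where
  "hypergraph V E \<longleftrightarrow> finite V \<and> E \<subseteq> Pow V"

definition uniform :: "nat \<Rightarrow> 'a set set \<Rightarrow> bool" where
  "uniform c E \<longleftrightarrow> (\<forall>e\<in>E. card e = c)"

definition hdeg :: "'a set set \<Rightarrow> 'a \<Rightarrow> nat" where
  "hdeg E v = card {e\<in>E. v \<in> e}"

definition avg_deg :: "'a set \<Rightarrow> 'a set set \<Rightarrow> real" where
  "avg_deg V E = (\<Sum>v\<in>V. real (hdeg E v)) / real (card V)"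

text \<open>Unoriented incidence matrix (all orientations +1).\<close>
definition incidence :: "'a \<Rightarrow> 'a set \<Rightarrow> real" where
  "incidence v e = (if v \<in> e then 1 else 0)"

definition edge_laplacian :: "'a set \<Rightarrow> 'a set set \<Rightarrow> 'a set \<Rightarrow> 'a set \<Rightarrow> real" where
  "edge_laplacian V E e f = (\<Sum>v\<in>V. incidence v e * incidence v f / real (hdeg E v))"

definition edge_lap_eigenvalue :: "'a set \<Rightarrow> 'a set set \<Rightarrow> real \<Rightarrow> bool" where
  "edge_lap_eigenvalue V E \<mu> \<longleftrightarrow>
     (\<exists>x :: 'a set \<Rightarrow> real. (\<exists>e\<in>E. x e \<noteq> 0) \<and>
        (\<forall>e\<in>E. (\<Sum>f\<in>E. edge_laplacian V E e f * x f) = \<mu> * x e))"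

definition mu1 :: "'a set \<Rightarrow> 'a set set \<Rightarrow> real" where
  "mu1 V E = Min {\<mu>. edge_lap_eigenvalue V E \<mu>}"

definition proper_strong_coloring :: "'a set set \<Rightarrow> nat \<Rightarrow> ('a set \<Rightarrow> nat) \<Rightarrow> bool" where
  "proper_strong_coloring E k col \<longleftrightarrow>
     (\<forall>e\<in>E. col e \<in> {1..k}) \<and>
     (\<forall>e1\<in>E. \<forall>e2\<in>E. e1 \<noteq> e2 \<and> col e1 = col e2 \<longrightarrow> e1 \<inter> e2 = {})"

definition strong_chromatic_index :: "'a set set \<Rightarrow> nat" where
  "strong_chromatic_index E = (LEAST k. \<exists>col. proper_strong_coloring E k col)"

definition hyperflower :: "'a set \<Rightarrow> 'a set set \<Rightarrow> nat \<Rightarrow> nat \<Rightarrow> nat \<Rightarrow> bool" where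
  "hyperflower V E c p k \<longleftrightarrow>
     finite V \<and> V = \<Union>E \<and> card E = p \<and>
     (\<exists>h. card h = k \<and>
        (\<forall>e\<in>E. card e = c \<and> h \<subseteq> e) \<and>
        (\<forall>e1\<in>E. \<forall>e2\<in>E. e1 \<noteq> e2 \<longrightarrow> e1 \<inter> e2 = h))"

definition chi_bound :: "nat \<Rightarrow> 'a set \<Rightarrow> 'a set set \<Rightarrow> real" where
  "chi_bound c V E =
     (if mu1 V E = real c / avg_deg V E then 1
      else (real c - mu1 V E) / (real c / avg_deg V E - mu1 V E))"

end

theory Submission
  imports Defs "HOL-Analysis.Analysis" "Jordan_Normal_Form.Spectral_Radius"
begin


lemma sum_nth_distinct:
  assumes "distinct xs"
  shows "(\<Sum>j<length xs. g (xs ! j)) = sum g (set xs)"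
proof -
  have "sum g (set xs) = sum_list (map g xs)" using assms by (simp add: sum_list_distinct_conv_sum_set)
  also have "\<dots> = (\<Sum>j<length xs. g (xs ! j))" by (simp add: sum_list_sum_nth atLeast0LessThan)
  finally show ?thesis by simp
qed

lemma finite_eigs:
  fixes S :: "'b \<Rightarrow> 'b \<Rightarrow> real"
  assumes "finite A"
  shows "finite {\<mu>. \<exists>x. (\<exists>e\<in>A. x e \<noteq> 0) \<and> (\<forall>e\<in>A. (\<Sum>f\<in>A. S e f * x f) = \<mu> * x e)}"
proof -
  obtain xs where xs: "set xs = A" "distinct xs" using finite_distinct_list[OF assms] by blast
  define n where "n = length xs"
  define Mt where "Mt = mat n n (\<lambda>(i,j). S (xs!i) (xs!j))"
  have Mt: "Mt \<in> carrier_mat n n" by (simp add: Mt_def)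
  have "{\<mu>. \<exists>x. (\<exists>e\<in>A. x e \<noteq> 0) \<and> (\<forall>e\<in>A. (\<Sum>f\<in>A. S e f * x f) = \<mu> * x e)} \<subseteq> spectrum Mt"
  proof
    fix \<mu> assume "\<mu> \<in> {\<mu>. \<exists>x. (\<exists>e\<in>A. x e \<noteq> 0) \<and> (\<forall>e\<in>A. (\<Sum>f\<in>A. S e f * x f) = \<mu> * x e)}"
    then obtain x e where e: "e \<in> A" "x e \<noteq> 0" and ev: "\<forall>e\<in>A. (\<Sum>f\<in>A. S e f * x f) = \<mu> * x e" by blast
    define v where "v = vec n (\<lambda>i. x (xs!i))"
    have vc: "v \<in> carrier_vec n" by (simp add: v_def)
    obtain i where i: "i < n" "xs ! i = e" using e xs by (metis in_set_conv_nth n_def)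
    have v0: "v \<noteq> 0\<^sub>v n"
    proof
      assume "v = 0\<^sub>v n"
      then have "v $ i = 0" using i by simp
      then show False using i e by (simp add: v_def)
    qed
    have "Mt *\<^sub>v v = \<mu> \<cdot>\<^sub>v v"
    proof (rule eq_vecI)
      fix i assume i: "i < dim_vec (\<mu> \<cdot>\<^sub>v v)"
      then have i': "i < n" by (simp add: v_def)
      have "(Mt *\<^sub>v v) $ i = (\<Sum>j<n. S (xs!i) (xs!j) * x (xs!j))"
        using i' by (simp add: Mt_def v_def scalar_prod_def atLeast0LessThan)
      also have "\<dots> = (\<Sum>f\<in>A. S (xs!i) f * x f)"
        using sum_nth_distinct[OF xs(2), of "\<lambda>f. S (xs!i) f * x f"] xs(1) by (simp add: n_def)
      also have "\<dots> = \<mu> * x (xs!i)" using ev i' xs(1) n_def by auto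
      finally show "(Mt *\<^sub>v v) $ i = (\<mu> \<cdot>\<^sub>v v) $ i" using i' by (simp add: v_def)
    qed (simp add: Mt_def v_def)
    then show "\<mu> \<in> spectrum Mt" using vc v0 Mt
      unfolding spectrum_def eigenvalue_def eigenvector_def by (auto simp: Mt_def)
  qed
  then show ?thesis using card_finite_spectrum(1)[OF Mt] finite_subset by blast
qed

definition bil :: "('b \<Rightarrow> 'b \<Rightarrow> real) \<Rightarrow> 'b set \<Rightarrow> ('b \<Rightarrow> real) \<Rightarrow> ('b \<Rightarrow> real) \<Rightarrow> real" where
  "bil S A u v = (\<Sum>e\<in>A. \<Sum>f\<in>A. S e f * u e * v f)"

definition nrm :: "'b set \<Rightarrow> ('b \<Rightarrow> real) \<Rightarrow> real" where
  "nrm A x = (\<Sum>e\<in>A. (x e)^2)"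

lemma bil_cong: "(\<And>e. e \<in> A \<Longrightarrow> u e = u' e) \<Longrightarrow> (\<And>e. e \<in> A \<Longrightarrow> v e = v' e) \<Longrightarrow> bil S A u v = bil S A u' v'"
  unfolding bil_def by (auto intro!: sum.cong)

lemma nrm_cong: "(\<And>e. e \<in> A \<Longrightarrow> u e = u' e) \<Longrightarrow> nrm A u = nrm A u'"
  unfolding nrm_def by (auto intro!: sum.cong)

lemma bil_scale: "bil S A (\<lambda>e. a * u e) (\<lambda>e. b * v e) = a * b * bil S A u v"
  unfolding bil_def by (simp add: sum_distrib_left algebra_simps)

lemma nrm_scale: "nrm A (\<lambda>e. a * u e) = a^2 * nrm A u"
  unfolding nrm_def by (simp add: sum_distrib_left algebra_simps power_mult_distrib)

lemma bil_add: "bil S A (\<lambda>e. x e + t * w e) (\<lambda>e. x e + t * w e)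
   = bil S A x x + t * bil S A x w + t * bil S A w x + t^2 * bil S A w w"
  unfolding bil_def by (simp add: sum.distrib sum_distrib_left algebra_simps power2_eq_square)

lemma nrm_add: "nrm A (\<lambda>e. x e + t * w e) = nrm A x + 2 * t * (\<Sum>e\<in>A. x e * w e) + t^2 * nrm A w"
  unfolding nrm_def by (simp add: sum.distrib sum_distrib_left algebra_simps power2_eq_square)

lemma bil_sym: "\<forall>e\<in>A. \<forall>f\<in>A. S e f = S f e \<Longrightarrow> bil S A u v = bil S A v u"
  unfolding bil_def
  by (subst sum.swap) (auto intro!: sum.cong simp: algebra_simps)

lemma bil_row: "bil S A u v = (\<Sum>e\<in>A. u e * (\<Sum>f\<in>A. S e f * v f))"
  unfolding bil_def by (simp add: sum_distrib_left algebra_simps)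

lemma nrm_nonneg: "nrm A x \<ge> 0" unfolding nrm_def by (simp add: sum_nonneg)

lemma nrm_zero: "finite A \<Longrightarrow> nrm A x = 0 \<Longrightarrow> e \<in> A \<Longrightarrow> x e = 0"
  unfolding nrm_def using sum_nonneg_eq_0_iff[of A "\<lambda>e. (x e)^2"] by simp

lemma nrm_term: "finite A \<Longrightarrow> e \<in> A \<Longrightarrow> (x e)^2 \<le> nrm A x"
  unfolding nrm_def by (rule member_le_sum) auto

lemma aux_half: "(D::real) > 0 \<Longrightarrow> - q / (2 * D) + q / (4 * D) = - q / (4 * D)"
  by (simp add: field_simps)

lemma quad_zero_lin:
  fixes a b :: real
  assumes "\<forall>t. a * t + b * t^2 \<ge> 0"
  shows "a = 0"
proof (rule ccontr)
  assume a: "a \<noteq> 0"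
  define t where "t = - a / (2 * (\<bar>b\<bar> + 1))"
  have d: "\<bar>b\<bar> + 1 > 0" by simp
  have "a * t = - (a^2) / (2 * (\<bar>b\<bar> + 1))" by (simp add: t_def power2_eq_square)
  moreover have "b * t^2 \<le> \<bar>b\<bar> * t^2" by (rule mult_right_mono) auto  
  moreover have "\<bar>b\<bar> * t^2 = \<bar>b\<bar> * a^2 / (4 * (\<bar>b\<bar> + 1)^2)"
    by (simp add: t_def power_divide power_mult_distrib power2_eq_square algebra_simps)
  moreover have "\<bar>b\<bar> * a^2 / (4 * (\<bar>b\<bar> + 1)^2) \<le> a^2 / (4 * (\<bar>b\<bar> + 1))"
  proof -
    have "\<bar>b\<bar> * a^2 / (4 * (\<bar>b\<bar> + 1)^2) = (a^2/(4*(\<bar>b\<bar>+1))) * (\<bar>b\<bar>/(\<bar>b\<bar>+1))"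
      using d by (simp add: power2_eq_square field_simps)
    also have "\<dots> \<le> a^2/(4*(\<bar>b\<bar>+1))" by (rule mult_left_le) auto
    finally show ?thesis .
  qed
  moreover have "a^2 > 0" using a by simp
  ultimately have "a * t + b * t^2 \<le> - (a^2) / (2 * (\<bar>b\<bar> + 1)) + a^2 / (4 * (\<bar>b\<bar> + 1))"
    by linarith
  also have "\<dots> = - (a^2) / (4 * (\<bar>b\<bar> + 1))" using aux_half[OF d] by simp
  also have "\<dots> < 0" using \<open>a^2 > 0\<close> d by (simp add: divide_pos_pos)
  finally have "a * t + b * t^2 < 0" .
  then show False using assms by (metis not_le)
qed


lemma rayleigh:
  fixes S :: "'b \<Rightarrow> 'b \<Rightarrow> real"
  assumes fin: "finite A" and ne: "A \<noteq> {}" and sym: "\<forall>e\<in>A. \<forall>f\<in>A. S e f = S f e"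
  shows "\<exists>lam x. (\<exists>e\<in>A. x e \<noteq> 0) \<and> (\<forall>e\<in>A. (\<Sum>f\<in>A. S e f * x f) = lam * x e)
              \<and> (\<forall>y. lam * nrm A y \<le> bil S A y y)"
proof -
  define X where "X = (\<lambda>e::'b. if e \<in> A then {-1..1::real} else {0})"
  define K0 where "K0 = PiE UNIV X"
  have "compactin (product_topology (\<lambda>_. euclidean) UNIV) K0"
    unfolding K0_def by (subst compactin_PiE) (auto simp: X_def)
  then have cK0: "compact K0" by (simp add: euclidean_product_topology)
  have cont_n: "continuous_on UNIV (nrm A)"
    unfolding nrm_def by (intro continuous_intros continuous_on_product_coordinates)
  have cont_q: "continuous_on UNIV (\<lambda>x. bil S A x x)"
    unfolding bil_def by (intro continuous_intros continuous_on_product_coordinates)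
  have "closed {x. nrm A x = 1}"
    by (rule closed_Collect_eq[OF cont_n]) (rule continuous_on_const)
  define K where "K = K0 \<inter> {x. nrm A x = 1}"
  have cK: "compact K" unfolding K_def using cK0 \<open>closed {x. nrm A x = 1}\<close> by blast
  obtain e0 where e0: "e0 \<in> A" using ne by blast
  have "(\<lambda>e. if e = e0 then 1 else 0) \<in> K"
    unfolding K_def K0_def X_def nrm_def using e0 fin
    by (auto simp: PiE_iff if_distrib[of "\<lambda>x. x^2"] sum.If_cases)
  then have Kne: "K \<noteq> {}" by blast
  obtain x0 where x0: "x0 \<in> K" and min: "\<forall>y\<in>K. bil S A x0 x0 \<le> bil S A y y"
    using continuous_attains_inf[OF cK Kne continuous_on_subset[OF cont_q]] by blast
  define lam where "lam = bil S A x0 x0"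
  have nx0: "nrm A x0 = 1" using x0 by (simp add: K_def)
  have ray: "lam * nrm A y \<le> bil S A y y" for y
  proof (cases "nrm A y = 0")
    case True
    have y0: "\<And>e. e \<in> A \<Longrightarrow> y e = 0" using nrm_zero[OF fin True] by blast
    have "bil S A y y = bil S A (\<lambda>_. 0) (\<lambda>_. 0)" using y0 by (intro bil_cong) auto
    then show ?thesis using True by (simp add: bil_def)
  next
    case False
    then have np: "nrm A y > 0" using nrm_nonneg[of A y] by linarith
    define r where "r = sqrt (nrm A y)"
    have r: "r > 0" "r^2 = nrm A y" using np by (auto simp: r_def)
    define z where "z = (\<lambda>e. if e \<in> A then y e / r else 0)"
    have zK: "z \<in> K"
    proof -
      have "z e \<in> X e" for e
      proof (cases "e \<in> A")
        case True
        have "(y e)^2 \<le> r^2" using nrm_term[OF fin True] r by simp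
        then have "\<bar>y e\<bar> \<le> r" using r(1) using abs_le_square_iff[of "y e" r] r(1) by simp
        then have "\<bar>y e / r\<bar> \<le> 1" using r(1) by (simp add: abs_div)
        then have "-1 \<le> y e / r \<and> y e / r \<le> 1" unfolding abs_le_iff by linarith
        then show ?thesis using True by (simp add: z_def X_def)
      qed (simp add: z_def X_def)
      moreover have "nrm A z = 1"
      proof -
        have "nrm A z = nrm A (\<lambda>e. (1/r) * y e)" by (rule nrm_cong) (simp add: z_def)
        also have "\<dots> = (1/r)^2 * nrm A y" by (rule nrm_scale)
        also have "\<dots> = 1" using r np by (simp add: power_divide)
        finally show ?thesis .
      qed
      ultimately show ?thesis unfolding K_def K0_def PiE_UNIV_domain by auto
    qed
    have "bil S A z z = bil S A (\<lambda>e. (1/r) * y e) (\<lambda>e. (1/r) * y e)"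
      by (rule bil_cong) (simp_all add: z_def)
    also have "\<dots> = bil S A y y / r^2" unfolding bil_scale by (simp add: power2_eq_square)
    finally have zeq: "bil S A z z = bil S A y y / r^2" .
    have "lam \<le> bil S A z z" using min zK unfolding lam_def by blast
    then have "lam \<le> bil S A y y / r^2" using zeq by simp
    then show ?thesis using r np by (simp add: pos_le_divide_eq)
  qed
  define w where "w = (\<lambda>e. (\<Sum>f\<in>A. S e f * x0 f) - lam * x0 e)"
  have "\<forall>t. (2 * nrm A w) * t + (bil S A w w - lam * nrm A w) * t^2 \<ge> 0"
  proof
    fix t
    have "0 \<le> bil S A (\<lambda>e. x0 e + t * w e) (\<lambda>e. x0 e + t * w e) - lam * nrm A (\<lambda>e. x0 e + t * w e)"
      using ray by simp
    also have "\<dots> = (bil S A x0 x0 - lam * nrm A x0) + 2 * t * (bil S A w x0 - lam * (\<Sum>e\<in>A. x0 e * w e))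
        + t^2 * (bil S A w w - lam * nrm A w)"
      unfolding bil_add nrm_add bil_sym[OF sym, of x0 w] by (simp add: algebra_simps)
    also have "bil S A w x0 - lam * (\<Sum>e\<in>A. x0 e * w e) = nrm A w"
      unfolding bil_row nrm_def w_def by (simp add: sum_subtractf[symmetric] sum_distrib_left algebra_simps power2_eq_square)
    finally show "(2 * nrm A w) * t + (bil S A w w - lam * nrm A w) * t^2 \<ge> 0"
      using nx0 by (simp add: lam_def algebra_simps)
  qed
  then have "2 * nrm A w = 0" by (rule quad_zero_lin)
  then have w0: "\<And>e. e \<in> A \<Longrightarrow> w e = 0" using nrm_zero[OF fin] by simp
  have "\<exists>e\<in>A. x0 e \<noteq> 0"
  proof (rule ccontr)
    assume "\<not> ?thesis"
    then have "nrm A x0 = 0" by (simp add: nrm_def)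
    then show False using nx0 by simp
  qed
  moreover have "\<forall>e\<in>A. (\<Sum>f\<in>A. S e f * x0 f) = lam * x0 e" using w0 by (simp add: w_def)
  ultimately show ?thesis using ray by blast
qed


definition hg :: "'a set \<Rightarrow> 'a set set \<Rightarrow> nat \<Rightarrow> bool" where
  "hg V E c \<longleftrightarrow> hypergraph V E \<and> uniform c E \<and> (\<forall>v\<in>V. hdeg E v \<ge> 1)"

lemma hg_finE: "hg V E c \<Longrightarrow> finite E"
  unfolding hg_def hypergraph_def by (meson finite_Pow_iff finite_subset)

lemma hg_finV: "hg V E c \<Longrightarrow> finite V"
  unfolding hg_def hypergraph_def by blast

lemma hg_edge: "hg V E c \<Longrightarrow> e \<in> E \<Longrightarrow> e \<subseteq> V"
  unfolding hg_def hypergraph_def by blast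

lemma hg_card: "hg V E c \<Longrightarrow> e \<in> E \<Longrightarrow> card e = c"
  unfolding hg_def uniform_def by blast

lemma hg_deg: "hg V E c \<Longrightarrow> v \<in> V \<Longrightarrow> real (hdeg E v) \<ge> 1"
  unfolding hg_def by simp

lemma deg_sum: "finite E \<Longrightarrow> (\<Sum>f\<in>E. incidence v f) = real (hdeg E v)"
proof -
  assume "finite E"
  have "{f\<in>E. v\<in>f} = E \<inter> {f. v \<in> f}" by auto
  then show ?thesis using \<open>finite E\<close> unfolding incidence_def hdeg_def by (simp add: sum.If_cases)
qed

lemma inc_sum_V: "hg V E c \<Longrightarrow> e \<in> E \<Longrightarrow> (\<Sum>v\<in>V. incidence v e) = real c"
proof -
  assume h: "hg V E c" "e \<in> E"
  have "V \<inter> {v. v \<in> e} = e" using hg_edge[OF h] by auto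
  then show ?thesis using hg_finV[OF h(1)] hg_card[OF h] unfolding incidence_def by (simp add: sum.If_cases)
qed

lemma inc_sq: "incidence v e * incidence v e = incidence v e"
  unfolding incidence_def by simp

lemma L_sym: "edge_laplacian V E e f = edge_laplacian V E f e"
  unfolding edge_laplacian_def by (simp add: mult.commute)

lemma L_disj: "e \<inter> f = {} \<Longrightarrow> edge_laplacian V E e f = 0"
  unfolding edge_laplacian_def incidence_def by (auto intro!: sum.neutral)

lemma L_row: "hg V E c \<Longrightarrow> e \<in> E \<Longrightarrow> (\<Sum>f\<in>E. edge_laplacian V E e f) = real c"
proof -
  assume h: "hg V E c" "e \<in> E"
  have "(\<Sum>f\<in>E. edge_laplacian V E e f) = (\<Sum>v\<in>V. \<Sum>f\<in>E. incidence v e * incidence v f / real (hdeg E v))"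
    unfolding edge_laplacian_def by (rule sum.swap)
  also have "\<dots> = (\<Sum>v\<in>V. incidence v e * (\<Sum>f\<in>E. incidence v f) / real (hdeg E v))"
    by (simp add: sum_distrib_left sum_divide_distrib)
  also have "\<dots> = (\<Sum>v\<in>V. incidence v e)"
  proof (rule sum.cong)
    fix v assume "v \<in> V"
    then have "real (hdeg E v) \<ge> 1" using hg_deg[OF h(1)] by blast
    then show "incidence v e * (\<Sum>f\<in>E. incidence v f) / real (hdeg E v) = incidence v e"
      using deg_sum[OF hg_finE[OF h(1)]] by simp
  qed simp
  also have "\<dots> = real c" by (rule inc_sum_V[OF h])
  finally show ?thesis .
qed

lemma L_col: "hg V E c \<Longrightarrow> f \<in> E \<Longrightarrow> (\<Sum>e\<in>E. edge_laplacian V E e f) = real c"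
  using L_row[of V E c f] L_sym[of V E] by simp

lemma L_trace: "hg V E c \<Longrightarrow> (\<Sum>e\<in>E. edge_laplacian V E e e) = real (card V)"
proof -
  assume h: "hg V E c"
  have "(\<Sum>e\<in>E. edge_laplacian V E e e) = (\<Sum>v\<in>V. \<Sum>e\<in>E. incidence v e / real (hdeg E v))"
    unfolding edge_laplacian_def inc_sq by (rule sum.swap)
  also have "\<dots> = (\<Sum>v\<in>V. 1)"
  proof (rule sum.cong)
    fix v assume "v \<in> V"
    then have "real (hdeg E v) \<ge> 1" using hg_deg[OF h] by blast
    then show "(\<Sum>e\<in>E. incidence v e / real (hdeg E v)) = 1"
      using deg_sum[OF hg_finE[OF h]] by (simp add: sum_divide_distrib[symmetric])
  qed simp
  finally show ?thesis by simp
qed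

lemma deg_total: "hg V E c \<Longrightarrow> (\<Sum>v\<in>V. real (hdeg E v)) = real c * real (card E)"
proof -
  assume h: "hg V E c"
  have "(\<Sum>v\<in>V. real (hdeg E v)) = (\<Sum>v\<in>V. \<Sum>f\<in>E. incidence v f)"
    using deg_sum[OF hg_finE[OF h]] by simp
  also have "\<dots> = (\<Sum>f\<in>E. \<Sum>v\<in>V. incidence v f)" by (rule sum.swap)
  also have "\<dots> = (\<Sum>f\<in>E. real c)" using inc_sum_V[OF h] by simp
  finally show ?thesis by simp
qed

lemma ratio: "hg V E c \<Longrightarrow> c \<ge> 1 \<Longrightarrow> E \<noteq> {} \<Longrightarrow> real c / avg_deg V E = real (card V) / real (card E)"
proof -
  assume h: "hg V E c" "c \<ge> 1" "E \<noteq> {}"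
  obtain e where e: "e \<in> E" using h(3) by blast
  have "card e = c" using hg_card[OF h(1) e] .
  then have "e \<noteq> {}" using h(2) by auto
  then have "V \<noteq> {}" using hg_edge[OF h(1) e] by blast
  then have "card V > 0" using hg_finV[OF h(1)] by (simp add: card_gt_0_iff)
  moreover have "card E > 0" using hg_finE[OF h(1)] h(3) by (simp add: card_gt_0_iff)
  ultimately show ?thesis unfolding avg_deg_def deg_total[OF h(1)] using h(2) by (simp add: field_simps)
qed


lemma mu1_char:
  assumes h: "hg V E c" and ne: "E \<noteq> {}"
  shows "edge_lap_eigenvalue V E (mu1 V E)"
    and "\<forall>y. mu1 V E * nrm E y \<le> bil (edge_laplacian V E) E y y"
proof -
  let ?L = "edge_laplacian V E"
  have fin: "finite E" by (rule hg_finE[OF h])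
  have sym: "\<forall>e\<in>E. \<forall>f\<in>E. ?L e f = ?L f e" using L_sym by blast
  obtain lam x where x: "\<exists>e\<in>E. x e \<noteq> 0" "\<forall>e\<in>E. (\<Sum>f\<in>E. ?L e f * x f) = lam * x e"
    and ray: "\<forall>y. lam * nrm E y \<le> bil ?L E y y"
    using rayleigh[OF fin ne sym] by blast
  define Ev where "Ev = {\<mu>. edge_lap_eigenvalue V E \<mu>}"
  have Ev_eq: "Ev = {\<mu>. \<exists>x. (\<exists>e\<in>E. x e \<noteq> 0) \<and> (\<forall>e\<in>E. (\<Sum>f\<in>E. ?L e f * x f) = \<mu> * x e)}"
    unfolding Ev_def edge_lap_eigenvalue_def by simp
  have finEv: "finite Ev" unfolding Ev_eq by (rule finite_eigs[OF fin])
  have lamEv: "lam \<in> Ev" unfolding Ev_eq using x by blast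
  have lamle: "lam \<le> \<mu>" if mem: "\<mu> \<in> Ev" for \<mu>
  proof -
    obtain z where z: "\<exists>e\<in>E. z e \<noteq> 0" "\<forall>e\<in>E. (\<Sum>f\<in>E. ?L e f * z f) = \<mu> * z e"
    proof -
      have "\<mu> \<in> {\<mu>. \<exists>x. (\<exists>e\<in>E. x e \<noteq> 0) \<and> (\<forall>e\<in>E. (\<Sum>f\<in>E. ?L e f * x f) = \<mu> * x e)}"
        using mem Ev_eq by simp
      then show ?thesis using that by blast
    qed
    have "bil ?L E z z = (\<Sum>e\<in>E. z e * (\<mu> * z e))" unfolding bil_row using z(2) by simp
    also have "\<dots> = \<mu> * nrm E z" unfolding nrm_def by (simp add: sum_distrib_left power2_eq_square algebra_simps)
    finally have zq: "bil ?L E z z = \<mu> * nrm E z" .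
    have "lam * nrm E z \<le> bil ?L E z z" using ray by blast
    then have "lam * nrm E z \<le> \<mu> * nrm E z" by (simp only: zq)
    moreover have "nrm E z > 0"
    proof -
      have "nrm E z \<noteq> 0" using z(1) nrm_zero[OF fin] by blast
      then show ?thesis using nrm_nonneg[of E z] by linarith
    qed
    ultimately show ?thesis by (rule mult_right_le_imp_le)
  qed
  have "mu1 V E = lam" unfolding mu1_def Ev_def[symmetric]
    by (rule Min_eqI[OF finEv lamle lamEv])
  then show "edge_lap_eigenvalue V E (mu1 V E)" "\<forall>y. mu1 V E * nrm E y \<le> bil ?L E y y"
    using lamEv ray unfolding Ev_def by auto
qed


lemma sum_delta_mult: "finite E \<Longrightarrow> e \<in> E \<Longrightarrow> (\<Sum>f\<in>E. g f * (if f = e then 1 else 0)) = (g e :: real)"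
proof -
  assume "finite E" "e \<in> E"
  have "(\<Sum>f\<in>E. g f * (if f = e then 1 else 0)) = (\<Sum>f\<in>E. if f = e then g f else 0)"
    by (rule sum.cong) auto
  also have "\<dots> = g e" using \<open>finite E\<close> \<open>e \<in> E\<close> by (simp add: sum.delta)
  finally show ?thesis .
qed

lemma mu1_le_diag:
  assumes h: "hg V E c" and ne: "E \<noteq> {}" and e: "e \<in> E"
  shows "mu1 V E \<le> edge_laplacian V E e e"
proof -
  let ?L = "edge_laplacian V E"
  have fin: "finite E" by (rule hg_finE[OF h])
  define y where "y = (\<lambda>f. if f = e then 1 else (0::real))"
  have "nrm E y = (\<Sum>f\<in>E. if f = e then 1 else 0)" unfolding nrm_def y_def by (rule sum.cong) auto
  also have "\<dots> = 1" using fin e by (simp add: sum.delta)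
  finally have n1: "nrm E y = 1" .
  have "bil ?L E y y = (\<Sum>e'\<in>E. y e' * ?L e' e)"
    unfolding bil_row y_def using sum_delta_mult[OF fin e] by simp
  also have "\<dots> = (\<Sum>e'\<in>E. ?L e' e * y e')" by (simp add: mult.commute)
  also have "\<dots> = ?L e e" unfolding y_def by (rule sum_delta_mult[OF fin e])
  finally have "bil ?L E y y = ?L e e" .
  then show ?thesis using mu1_char(2)[OF h ne, rule_format, of y] n1 by simp
qed

lemma mu1_le_NM:
  assumes h: "hg V E c" and ne: "E \<noteq> {}"
  shows "mu1 V E \<le> real (card V) / real (card E)"
proof -
  have fin: "finite E" by (rule hg_finE[OF h])
  have M: "real (card E) > 0" using fin ne by (simp add: card_gt_0_iff)
  have "(\<Sum>e\<in>E. mu1 V E) \<le> (\<Sum>e\<in>E. edge_laplacian V E e e)"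
    by (rule sum_mono) (rule mu1_le_diag[OF h ne])
  then have "real (card E) * mu1 V E \<le> real (card V)" using L_trace[OF h] by simp
  then show ?thesis using M by (simp add: field_simps)
qed

lemma mu1_le_c:
  assumes h: "hg V E c" and ne: "E \<noteq> {}"
  shows "mu1 V E \<le> real c"
proof -
  have fin: "finite E" by (rule hg_finE[OF h])
  have M: "real (card E) > 0" using fin ne by (simp add: card_gt_0_iff)
  have "bil (edge_laplacian V E) E (\<lambda>_. 1) (\<lambda>_. 1) = (\<Sum>e\<in>E. real c)"
    unfolding bil_row using L_row[OF h] by simp
  moreover have "nrm E (\<lambda>_. 1) = real (card E)" unfolding nrm_def by simp
  ultimately have "mu1 V E * real (card E) \<le> real c * real (card E)"
    using mu1_char(2)[OF h ne, rule_format, of "\<lambda>_. 1"] by (simp add: mult.commute)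
  then show ?thesis using M by simp
qed


lemma class_ineq:
  fixes i :: nat and cl :: "'a set \<Rightarrow> nat" and t :: real and V :: "'a set"
  assumes h: "hg V E c" and ne: "E \<noteq> {}"
    and disj: "\<forall>e\<in>E. \<forall>f\<in>E. e \<noteq> f \<and> cl e = cl f \<longrightarrow> e \<inter> f = {}"
  defines "a \<equiv> (\<lambda>e. if cl e = i then 1 else (0::real))"
  shows "mu1 V E * ((\<Sum>e\<in>E. a e) - 2 * t * (\<Sum>e\<in>E. a e) + t^2 * real (card E))
     \<le> (\<Sum>e\<in>E. a e * edge_laplacian V E e e) - 2 * t * real c * (\<Sum>e\<in>E. a e) + t^2 * real c * real (card E)"
proof -
  let ?L = "edge_laplacian V E"
  have fin: "finite E" by (rule hg_finE[OF h])
  define s where "s = (\<Sum>e\<in>E. a e)"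
  define T where "T = (\<Sum>e\<in>E. a e * ?L e e)"
  define M where "M = real (card E)"
  define R where "R = (\<lambda>e. \<Sum>f\<in>E. ?L e f * a f)"
  define y where "y = (\<lambda>e. a e - t)"
  have asq: "a e * a e = a e" for e unfolding a_def by simp
  have "nrm E y = (\<Sum>e\<in>E. a e - 2 * t * a e + t^2)"
    unfolding nrm_def y_def by (rule sum.cong) (simp_all add: power2_eq_square algebra_simps asq)
  also have "\<dots> = s - 2 * t * s + t^2 * M"
    by (simp add: sum.distrib sum_subtractf sum_distrib_left s_def M_def)
  finally have nrmy: "nrm E y = s - 2 * t * s + t^2 * M" .
  have Ry: "(\<Sum>f\<in>E. ?L e f * y f) = R e - t * real c" if "e \<in> E" for e
  proof -
    have "(\<Sum>f\<in>E. ?L e f * y f) = R e - t * (\<Sum>f\<in>E. ?L e f)"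
      unfolding y_def R_def by (simp add: algebra_simps sum_subtractf sum_distrib_left)
    then show ?thesis using L_row[OF h that] by simp
  qed
  have aR: "a e * R e = a e * ?L e e" if "e \<in> E" for e
  proof (cases "cl e = i")
    case True
    have "R e = (\<Sum>f\<in>E. ?L e f * (if f = e then 1 else 0))"
      unfolding R_def
    proof (rule sum.cong)
      fix f assume f: "f \<in> E"
      show "?L e f * a f = ?L e f * (if f = e then 1 else 0)"
      proof (cases "f = e")
        case False
        show ?thesis
        proof (cases "cl f = i")
          case True
          then have "e \<inter> f = {}" using disj that f \<open>cl e = i\<close> False by metis
          then show ?thesis using L_disj[of e f V E] False by simp
        qed (simp add: a_def False)
      qed (simp add: a_def True)
    qed simp
    also have "\<dots> = ?L e e" by (rule sum_delta_mult[OF fin that])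
    finally show ?thesis by simp
  qed (simp add: a_def)
  have sumR: "(\<Sum>e\<in>E. R e) = real c * s"
  proof -
    have "(\<Sum>e\<in>E. R e) = (\<Sum>f\<in>E. a f * (\<Sum>e\<in>E. ?L e f))"
      unfolding R_def by (subst sum.swap) (simp add: sum_distrib_left algebra_simps)
    also have "\<dots> = (\<Sum>f\<in>E. a f * real c)" using L_col[OF h] by simp
    finally show ?thesis by (simp add: s_def sum_distrib_left algebra_simps)
  qed
  have "bil ?L E y y = (\<Sum>e\<in>E. y e * (R e - t * real c))"
    unfolding bil_row using Ry by simp
  also have "\<dots> = (\<Sum>e\<in>E. a e * R e - t * real c * a e - t * R e + t^2 * real c)"
    unfolding y_def by (rule sum.cong) (simp_all add: algebra_simps power2_eq_square)
  also have "\<dots> = (\<Sum>e\<in>E. a e * R e) - t * real c * s - t * (\<Sum>e\<in>E. R e) + t^2 * real c * M"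
    by (simp add: sum.distrib sum_subtractf sum_distrib_left s_def M_def)
  also have "(\<Sum>e\<in>E. a e * R e) = T" unfolding T_def using aR by (intro sum.cong) auto
  finally have bily: "bil ?L E y y = T - 2 * t * real c * s + t^2 * real c * M"
    using sumR by simp
  have "mu1 V E * nrm E y \<le> bil ?L E y y" using mu1_char(2)[OF h ne] by blast
  then show ?thesis using nrmy bily unfolding s_def T_def M_def by simp
qed



lemma exists_col: "finite E \<Longrightarrow> \<exists>cl. proper_strong_coloring E (card E) cl"
proof -
  assume fin: "finite E"
  obtain f where f: "bij_betw f E {0..<card E}" using ex_bij_betw_finite_nat[OF fin] by blast
  define cl where "cl = (\<lambda>e. Suc (f e))"
  have "\<forall>e\<in>E. f e \<in> {0..<card E}" using bij_betwE[OF f] by blast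
  then have "\<forall>e\<in>E. cl e \<in> {1..card E}" unfolding cl_def by auto
  moreover have "\<forall>e1\<in>E. \<forall>e2\<in>E. e1 \<noteq> e2 \<and> cl e1 = cl e2 \<longrightarrow> e1 \<inter> e2 = {}"
    using f unfolding cl_def bij_betw_def inj_on_def by auto
  ultimately show ?thesis unfolding proper_strong_coloring_def by blast
qed

lemma chi_prop: "finite E \<Longrightarrow> \<exists>cl. proper_strong_coloring E (strong_chromatic_index E) cl"
proof -
  assume fin: "finite E"
  have "\<exists>k cl. proper_strong_coloring E k cl" using exists_col[OF fin] by blast
  then show ?thesis unfolding strong_chromatic_index_def by (rule LeastI_ex)
qed

lemma chi_le: "finite E \<Longrightarrow> strong_chromatic_index E \<le> card E"
  unfolding strong_chromatic_index_def by (rule Least_le) (rule exists_col)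

lemma final_alg:
  fixes mu N M c k Q :: real
  assumes main: "mu * (M - Q / M) \<le> N - c * Q / M" and M: "M > 0" and k: "k \<ge> 1"
    and cs: "M^2 \<le> k * Q" and muc: "mu \<le> c" and D: "N / M - mu > 0"
  shows "(c - mu) / (N / M - mu) \<le> k"
proof -
  have "mu * M - mu * Q / M \<le> N - c * Q / M" using main by (simp add: algebra_simps)
  then have "(c - mu) * Q / M \<le> N - mu * M" by (simp add: algebra_simps diff_divide_distrib)
  then have "(c - mu) * Q \<le> (N - mu * M) * M" using M by (simp add: pos_divide_le_eq)
  moreover have "(c - mu) * M^2 \<le> (c - mu) * (k * Q)" using cs muc by (simp add: mult_left_mono)
  ultimately have "(c - mu) * M^2 \<le> k * ((N - mu * M) * M)" using k
    by (smt (verit, ccfv_SIG) mult.left_commute mult_left_mono)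
  then have "(c - mu) * M * M \<le> (k * (N / M - mu) * M) * M" using M
    by (simp add: power2_eq_square algebra_simps)
  then have "c - mu \<le> k * (N / M - mu)" using M by simp
  then show ?thesis using D by (simp add: divide_le_eq mult.commute)
qed


lemma part1:
  assumes h: "hg V E c" and c1: "c \<ge> 1" and ne: "E \<noteq> {}"
  shows "mu1 V E \<le> real c / avg_deg V E \<and> real (strong_chromatic_index E) \<ge> chi_bound c V E"
proof -
  let ?L = "edge_laplacian V E"
  have fin: "finite E" by (rule hg_finE[OF h])
  define M where "M = real (card E)"
  define N where "N = real (card V)"
  define mu where "mu = mu1 V E"
  define k where "k = strong_chromatic_index E"
  have M: "M > 0" using fin ne by (simp add: M_def card_gt_0_iff)
  have rat: "real c / avg_deg V E = N / M" using ratio[OF h c1 ne] by (simp add: N_def M_def)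
  have muNM: "mu \<le> N / M" using mu1_le_NM[OF h ne] by (simp add: mu_def N_def M_def)
  have muc: "mu \<le> real c" using mu1_le_c[OF h ne] by (simp add: mu_def)
  obtain cl where cl: "proper_strong_coloring E k cl" using chi_prop[OF fin] unfolding k_def by blast
  have clr: "\<forall>e\<in>E. cl e \<in> {1..k}" and disj: "\<forall>e\<in>E. \<forall>f\<in>E. e \<noteq> f \<and> cl e = cl f \<longrightarrow> e \<inter> f = {}"
    using cl unfolding proper_strong_coloring_def by auto
  have k1: "real k \<ge> 1" using clr ne by fastforce
  define s where "s = (\<lambda>i. \<Sum>e\<in>E. if cl e = i then 1 else (0::real))"
  define T where "T = (\<lambda>i. \<Sum>e\<in>E. (if cl e = i then 1 else (0::real)) * ?L e e)"
  define Q where "Q = (\<Sum>i\<in>{1..k}. (s i)^2)"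
  have ineq: "mu * (s i - (s i)^2 / M) \<le> T i - real c * (s i)^2 / M" for i
  proof -
    have A: "mu * (s i - 2 * (s i / M) * s i + (s i / M)^2 * M) \<le> T i - 2 * (s i / M) * real c * s i + (s i / M)^2 * real c * M"
      using class_ineq[OF h ne disj, of i "s i / M"] unfolding s_def T_def M_def mu_def by simp
    have B: "s i - 2 * (s i / M) * s i + (s i / M)^2 * M = s i - (s i)^2 / M"
      using M by (simp add: power2_eq_square field_simps)
    have C: "T i - 2 * (s i / M) * real c * s i + (s i / M)^2 * real c * M = T i - real c * (s i)^2 / M"
      using M by (simp add: power2_eq_square field_simps)
    show ?thesis using A unfolding B C .
  qed
  have sum_sel: "(\<Sum>i\<in>{1..k}. \<Sum>e\<in>E. (if cl e = i then 1 else (0::real)) * g e) = (\<Sum>e\<in>E. g e)" for g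
  proof -
    have "(\<Sum>i\<in>{1..k}. \<Sum>e\<in>E. (if cl e = i then 1 else (0::real)) * g e)
        = (\<Sum>e\<in>E. \<Sum>i\<in>{1..k}. (if cl e = i then g e else 0))"
      by (subst sum.swap) (auto intro!: sum.cong)
    also have "\<dots> = (\<Sum>e\<in>E. g e)" using clr by (auto intro!: sum.cong simp: sum.delta)
    finally show ?thesis .
  qed
  have sumS: "(\<Sum>i\<in>{1..k}. s i) = M" using sum_sel[of "\<lambda>_. 1"] by (simp add: s_def M_def)
  have sumT: "(\<Sum>i\<in>{1..k}. T i) = N" using sum_sel[of "\<lambda>e. ?L e e"] L_trace[OF h] by (simp add: T_def N_def)
  have "(\<Sum>i\<in>{1..k}. mu * (s i - (s i)^2 / M)) \<le> (\<Sum>i\<in>{1..k}. T i - real c * (s i)^2 / M)"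
    by (rule sum_mono) (rule ineq)
  moreover have "(\<Sum>i\<in>{1..k}. mu * (s i - (s i)^2 / M)) = mu * ((\<Sum>i\<in>{1..k}. s i) - (\<Sum>i\<in>{1..k}. (s i)^2) / M)"
    by (simp only: sum_distrib_left[symmetric] sum_subtractf sum_divide_distrib)
  moreover have "(\<Sum>i\<in>{1..k}. T i - real c * (s i)^2 / M) = (\<Sum>i\<in>{1..k}. T i) - real c * (\<Sum>i\<in>{1..k}. (s i)^2) / M"
    by (simp add: sum_subtractf sum_divide_distrib[symmetric] sum_distrib_left[symmetric])
  ultimately have main: "mu * (M - Q / M) \<le> N - real c * Q / M"
    unfolding sumS sumT Q_def by simp
  have cs: "M^2 \<le> real k * Q"
  proof -
    define m where "m = M / real k"
    have "0 \<le> (\<Sum>i\<in>{1..k}. (s i - m)^2)" by (simp add: sum_nonneg)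
    also have "\<dots> = (\<Sum>i\<in>{1..k}. (s i)^2 - 2 * m * s i + m^2)"
      by (rule sum.cong) (simp_all add: power2_eq_square algebra_simps)
    also have "\<dots> = Q - 2 * m * (\<Sum>i\<in>{1..k}. s i) + real k * m^2"
      by (simp add: sum.distrib sum_subtractf sum_distrib_left Q_def)
    also have "\<dots> = Q - 2 * (M / real k) * (\<Sum>i\<in>{1..k}. s i) + real k * (M / real k)^2"
      by (simp add: m_def)
    also have "\<dots> = Q - M^2 / real k" using k1 sumS by (simp add: power2_eq_square field_simps)
    finally have "M^2 / real k \<le> Q" by simp
    then show ?thesis using k1 by (simp add: divide_le_eq mult.commute)
  qed
  have "real k \<ge> chi_bound c V E"
  proof (cases "mu = N / M")
    case True
    then show ?thesis using k1 rat unfolding chi_bound_def mu_def by simp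
  next
    case False
    then have D: "N / M - mu > 0" using muNM by simp
    have "(real c - mu) / (N / M - mu) \<le> real k" by (rule final_alg[OF main M k1 cs muc D])
    then show ?thesis using False rat unfolding chi_bound_def mu_def by simp
  qed
  then show ?thesis using muNM rat unfolding mu_def k_def by simp
qed


lemma L_as_sum: "finite V \<Longrightarrow> e \<inter> f \<subseteq> V \<Longrightarrow>
   edge_laplacian V E e f = (\<Sum>v\<in>e \<inter> f. 1 / real (hdeg E v))"
proof -
  assume fin: "finite V" and sub: "e \<inter> f \<subseteq> V"
  have "edge_laplacian V E e f = (\<Sum>v\<in>V. if v \<in> e \<inter> f then 1 / real (hdeg E v) else 0)"
    unfolding edge_laplacian_def incidence_def by (rule sum.cong) auto
  also have "\<dots> = (\<Sum>v\<in>V \<inter> (e \<inter> f). 1 / real (hdeg E v))"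
    using fin by (simp add: sum.If_cases Int_def)
  also have "V \<inter> (e \<inter> f) = e \<inter> f" using sub by blast
  finally show ?thesis .
qed

lemma part2:
  assumes p2: "p \<ge> 2" and k1: "1 \<le> k" and kc: "k \<le> c - 1" and hf: "hyperflower V E c p k"
  shows "real (strong_chromatic_index E) = chi_bound c V E"
proof -
  let ?L = "edge_laplacian V E"
  have hf': "finite V \<and> V = \<Union>E \<and> card E = p \<and> (\<exists>h. card h = k \<and> (\<forall>e\<in>E. card e = c \<and> h \<subseteq> e) \<and> (\<forall>e1\<in>E. \<forall>e2\<in>E. e1 \<noteq> e2 \<longrightarrow> e1 \<inter> e2 = h))"
    using hf unfolding hyperflower_def .
  have finV: "finite V" using hf' by (rule conjunct1)
  have VE: "V = \<Union>E" using hf' by (elim conjE)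
  have cE: "card E = p" using hf' by (elim conjE)
  have ex: "\<exists>h. card h = k \<and> (\<forall>e\<in>E. card e = c \<and> h \<subseteq> e) \<and> (\<forall>e1\<in>E. \<forall>e2\<in>E. e1 \<noteq> e2 \<longrightarrow> e1 \<inter> e2 = h)"
    using hf' by (elim conjE)
  obtain h where hh: "card h = k \<and> (\<forall>e\<in>E. card e = c \<and> h \<subseteq> e) \<and> (\<forall>e1\<in>E. \<forall>e2\<in>E. e1 \<noteq> e2 \<longrightarrow> e1 \<inter> e2 = h)"
    using ex ..
  have ch: "card h = k" and ed: "\<forall>e\<in>E. card e = c \<and> h \<subseteq> e" and pw: "\<forall>e1\<in>E. \<forall>e2\<in>E. e1 \<noteq> e2 \<longrightarrow> e1 \<inter> e2 = h"
    using hh by simp_all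
  have finE: "finite E"
  proof (rule ccontr)
    assume "infinite E" then have "card E = 0" by simp
    then show False using cE p2 by simp
  qed
  have neE: "E \<noteq> {}" using cE p2 by auto
  have c2: "c \<ge> 1" using k1 kc by simp
  have kc': "k \<le> c" using kc by simp
  have finh: "finite h"
  proof (rule ccontr)
    assume "infinite h" then have "card h = 0" by simp
    then show False using ch k1 by simp
  qed
  have neh: "h \<noteq> {}" using ch k1 by auto
  have hdeg_h: "hdeg E v = p" if "v \<in> h" for v
  proof -
    have "{e\<in>E. v \<in> e} = E" using ed that by blast
    then show ?thesis unfolding hdeg_def using cE by simp
  qed
  have hdeg_o: "hdeg E v = 1" if "e \<in> E" "v \<in> e - h" for e v
  proof -
    have "{f\<in>E. v \<in> f} = {e}" using pw that by blast
    then show ?thesis unfolding hdeg_def by simp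
  qed
  have hgV: "hg V E c"
    unfolding hg_def hypergraph_def uniform_def
  proof (intro conjI ballI)
    show "finite V" by (rule finV)
    show "E \<subseteq> Pow V" using VE by blast
    show "card e = c" if "e \<in> E" for e using ed that by blast
    show "1 \<le> hdeg E v" if vV: "v \<in> V" for v
    proof -
      obtain e where "e \<in> E" "v \<in> e" using vV VE by blast
      then have "{f\<in>E. v \<in> f} \<noteq> {}" by blast
      moreover have "finite {f\<in>E. v \<in> f}" using finE by simp
      ultimately show ?thesis unfolding hdeg_def by (simp add: Suc_le_eq card_gt_0_iff)
    qed
  qed
  define a where "a = real c - real k"
  define b where "b = real k / real p"
  have pp: "real p > 0" using p2 by simp
  have Lval: "?L e f = (if e = f then a else 0) + b" if "e \<in> E" "f \<in> E" for e f
  proof (cases "e = f")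
    case False
    have "e \<inter> f = h" using pw that False by blast
    moreover have "e \<inter> f \<subseteq> V" using that VE by blast
    ultimately have "?L e f = (\<Sum>v\<in>h. 1 / real (hdeg E v))" using L_as_sum[OF finV] by simp
    also have "\<dots> = (\<Sum>v\<in>h. 1 / real p)" using hdeg_h by simp
    also have "\<dots> = b" using ch by (simp add: b_def)
    finally show ?thesis using False by simp
  next
    case True
    have he: "h \<subseteq> e" using ed that(1) by blast
    have "e \<subseteq> V" using that(1) VE by blast
    then have fe: "finite e" using finV finite_subset by blast
    have "?L e e = (\<Sum>v\<in>e. 1 / real (hdeg E v))" using L_as_sum[OF finV, of e e E] that(1) VE by auto
    also have "\<dots> = (\<Sum>v\<in>h. 1 / real (hdeg E v)) + (\<Sum>v\<in>e - h. 1 / real (hdeg E v))"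
      using sum.subset_diff[OF he fe, of "\<lambda>v. 1 / real (hdeg E v)"] by (simp add: add.commute)
    also have "\<dots> = (\<Sum>v\<in>h. 1 / real p) + (\<Sum>v\<in>e - h. 1)"
      using hdeg_h hdeg_o[OF that(1)] by simp
    also have "\<dots> = b + real (card (e - h))" using ch by (simp add: b_def)
    also have "card (e - h) = c - k" using card_Diff_subset[OF finh he] ed that(1) ch by simp
    finally show ?thesis using True kc' by (simp add: a_def of_nat_diff)
  qed
  have rowx: "(\<Sum>f\<in>E. ?L e f * x f) = a * x e + b * (\<Sum>f\<in>E. x f)" if "e \<in> E" for e x
  proof -
    have "(\<Sum>f\<in>E. ?L e f * x f) = (\<Sum>f\<in>E. (if f = e then a * x f else 0) + b * x f)"
      using Lval[OF that] by (intro sum.cong) (auto simp: algebra_simps)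
    also have "\<dots> = a * x e + b * (\<Sum>f\<in>E. x f)"
      using finE that by (simp add: sum.distrib sum.delta sum_distrib_left)
    finally show ?thesis .
  qed
  define Ev where "Ev = {\<mu>. edge_lap_eigenvalue V E \<mu>}"
  have Evsub: "Ev \<subseteq> {a, a + real k}"
  proof
    fix \<mu> assume "\<mu> \<in> Ev"
    then obtain x where x0: "\<exists>e\<in>E. x e \<noteq> 0" and ev: "\<forall>e\<in>E. (\<Sum>f\<in>E. ?L e f * x f) = \<mu> * x e"
      unfolding Ev_def edge_lap_eigenvalue_def by blast
    have ev': "a * x e + b * (\<Sum>f\<in>E. x f) = \<mu> * x e" if "e \<in> E" for e
      using ev rowx[OF that, of x] that by simp
    show "\<mu> \<in> {a, a + real k}"
    proof (cases "(\<Sum>f\<in>E. x f) = 0")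
      case True
      obtain e where eE: "e \<in> E" and xe: "x e \<noteq> 0" using x0 by blast
      have "a * x e = \<mu> * x e" using ev'[OF eE] True by simp
      then have "a = \<mu>" using \<open>x e \<noteq> 0\<close> by simp
      then show ?thesis by simp
    next
      case False
      have "(\<Sum>e\<in>E. a * x e + b * (\<Sum>f\<in>E. x f)) = (\<Sum>e\<in>E. \<mu> * x e)"
        using ev' by (rule sum.cong[OF refl])
      then have S1: "a * (\<Sum>f\<in>E. x f) + real p * b * (\<Sum>f\<in>E. x f) = \<mu> * (\<Sum>f\<in>E. x f)"
        using cE by (simp add: sum.distrib sum_distrib_left mult.assoc)
      have pb: "real p * b = real k" using pp by (simp add: b_def)
      have "a * (\<Sum>f\<in>E. x f) + real k * (\<Sum>f\<in>E. x f) = \<mu> * (\<Sum>f\<in>E. x f)"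
        using S1 unfolding pb .
      then have "(a + real k) * (\<Sum>f\<in>E. x f) = \<mu> * (\<Sum>f\<in>E. x f)" by (simp add: distrib_right)
      then have "a + real k = \<mu>" using False by simp
      then show ?thesis by simp
    qed
  qed
  have aEv: "a \<in> Ev"
  proof -
    obtain e1 e2 where e12: "e1 \<in> E" "e2 \<in> E" "e1 \<noteq> e2"
    proof -
      have "1 < card E" using cE p2 by simp
      then have "\<not> (\<forall>a\<in>E. \<forall>b\<in>E. a = b)" using card_le_Suc0_iff_eq[OF finE] by simp
      then show ?thesis using that by blast
    qed
    define x where "x = (\<lambda>e. if e = e1 then 1 else if e = e2 then -1 else (0::real))"
    have "(\<Sum>f\<in>E. x f) = (\<Sum>f\<in>E. (if f = e1 then 1 else 0) + (if f = e2 then -1 else (0::real)))"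
      unfolding x_def using e12(3) by (intro sum.cong) auto
    also have "\<dots> = 0" using finE e12 by (simp add: sum.distrib sum.delta)
    finally have X0: "(\<Sum>f\<in>E. x f) = 0" .
    have "\<exists>e\<in>E. x e \<noteq> 0" using e12 by (auto simp: x_def)
    moreover have "\<forall>e\<in>E. (\<Sum>f\<in>E. ?L e f * x f) = a * x e" using rowx X0 by simp
    ultimately show ?thesis unfolding Ev_def edge_lap_eigenvalue_def by blast
  qed
  have mu: "mu1 V E = a"
  proof -
    have "finite Ev" using Evsub finite_subset by blast
    moreover have "\<And>y. y \<in> Ev \<Longrightarrow> a \<le> y" using Evsub by auto
    ultimately show ?thesis unfolding mu1_def Ev_def[symmetric] using aEv by (intro Min_eqI) auto
  qed
  have NV: "real (card V) = real p * (a + b)"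
  proof -
    have "real (card V) = (\<Sum>e\<in>E. ?L e e)" using L_trace[OF hgV] by simp
    also have "\<dots> = (\<Sum>e\<in>E. a + b)" using Lval by simp
    finally show ?thesis using cE by simp
  qed
  have rat: "real c / avg_deg V E = a + b"
    using ratio[OF hgV c2 neE] NV cE pp by simp
  have bpos: "b > 0" using k1 pp by (simp add: b_def)
  have cb: "chi_bound c V E = real p"
  proof -
    have "mu1 V E \<noteq> real c / avg_deg V E" using mu rat bpos by simp
    then have "chi_bound c V E = (real c - a) / (a + b - a)" unfolding chi_bound_def mu rat by simp
    also have "\<dots> = real k / b" by (simp add: a_def)
    also have "\<dots> = real p" using k1 pp by (simp add: b_def)
    finally show ?thesis .
  qed
  have "strong_chromatic_index E \<le> p" using chi_le[OF finE] cE by simp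
  moreover have "p \<le> strong_chromatic_index E"
  proof -
    obtain cl where cl: "proper_strong_coloring E (strong_chromatic_index E) cl" using chi_prop[OF finE] by blast
    have inj: "inj_on cl E"
    proof (rule inj_onI)
      fix e1 e2 assume "e1 \<in> E" "e2 \<in> E" "cl e1 = cl e2"
      show "e1 = e2"
      proof (rule ccontr)
        assume "e1 \<noteq> e2"
        then have "e1 \<inter> e2 = {}" using cl \<open>e1 \<in> E\<close> \<open>e2 \<in> E\<close> \<open>cl e1 = cl e2\<close>
          unfolding proper_strong_coloring_def by blast
        moreover have "e1 \<inter> e2 = h" using pw \<open>e1 \<in> E\<close> \<open>e2 \<in> E\<close> \<open>e1 \<noteq> e2\<close> by blast
        ultimately show False using neh by simp
      qed
    qed
    have "cl ` E \<subseteq> {1..strong_chromatic_index E}" using cl unfolding proper_strong_coloring_def by blast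
    then have "card E \<le> card {1..strong_chromatic_index E}" using card_inj_on_le[OF inj] by blast
    then show ?thesis using cE by simp
  qed
  ultimately have "strong_chromatic_index E = p" by simp
  then show ?thesis using cb by simp
qed


theorem mainTheorem15:
  shows "(\<forall>(c::nat) (V::'a set) (E::'a set set).
            c \<ge> 1 \<and> hypergraph V E \<and> uniform c E \<and> card E \<ge> 1 \<and>
            (\<forall>v\<in>V. hdeg E v \<ge> 1) \<longrightarrow>
              mu1 V E \<le> real c / avg_deg V E \<and>
              real (strong_chromatic_index E) \<ge> chi_bound c V E)
       \<and> (\<forall>(c::nat) (p::nat) (k::nat) (V::'a set) (E::'a set set).
            p \<ge> 2 \<and> 1 \<le> k \<and> k \<le> c - 1 \<and> hyperflower V E c p k \<longrightarrow>
              real (strong_chromatic_index E) = chi_bound c V E)"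
proof (intro conjI allI impI)
  fix c :: nat and V :: "'a set" and E :: "'a set set"
  assume a: "c \<ge> 1 \<and> hypergraph V E \<and> uniform c E \<and> card E \<ge> 1 \<and> (\<forall>v\<in>V. hdeg E v \<ge> 1)"
  then have h: "hg V E c" unfolding hg_def by blast
  have ne: "E \<noteq> {}" using a by auto
  have c1: "c \<ge> 1" using a by blast
  show "mu1 V E \<le> real c / avg_deg V E" using part1[OF h c1 ne] by blast
  show "real (strong_chromatic_index E) \<ge> chi_bound c V E" using part1[OF h c1 ne] by blast
next
  fix c p k :: nat and V :: "'a set" and E :: "'a set set"
  assume a: "p \<ge> 2 \<and> 1 \<le> k \<and> k \<le> c - 1 \<and> hyperflower V E c p k"
  then show "real (strong_chromatic_index E) = chi_bound c V E"
    using part2[of p k c V E] by blast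
qed

end
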